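(* There is an absolute constant $A > 0$ such that the following holds. Let $E \subset B(1) \subset \mathbb{R}^{2}$, $\varepsilon \in (0,1)$ and $\beta \in (0,\tfrac{1}{2})$. Then there exists a $2\beta$-Lipschitz graph $\Gamma \subset \mathbb{R}^{2}$ over the $x$-axis such that \[ \mathcal{H}^{1}\big(\{x \in E : \Theta^*_{E,\beta}(x) \leq \varepsilon\} \setminus \Gamma\big) \leq A\,\varepsilon/\beta. \]
   Context: $B(1)$ is the closed unit ball centred at the origin. A $\beta$-Lipschitz graph over the $x$-axis is a set $\{(t,f(t)) : t \in A\}$ with $A\subset\mathbb{R}$ and $f$ $\beta$-Lipschitz. For $\beta > 0$, $\mathcal{C}_\beta = \{(x,y) : |y| \geq \beta |x|\}$, $\mathcal{C}_\beta(x,r) = (x + \mathcal{C}_\beta) \cap B(x,r)$, and $\Theta^*_{E,\beta}(x) = \sup_{r>0} \mathcal{H}^1(\mathcal{C}_\beta(x,r) \cap E)/r$. *)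

theory Defs
  imports "HOL-Analysis.Analysis"
begin

type_synonym point = "real \<times> real"

text \<open>delta-approximating one-dimensional Hausdorff content (outer), via countable covers
  by sets of diameter at most delta (unnormalised diameter convention, so H1 = length).\<close>
definition hausdorff_pre1 :: "real \<Rightarrow> point set \<Rightarrow> ennreal" where
  "hausdorff_pre1 \<delta> E =
     (INF U \<in> {U :: nat \<Rightarrow> point set. E \<subseteq> (\<Union>i. U i) \<and>
                  (\<forall>i. bounded (U i) \<and> diameter (U i) \<le> \<delta>)}.
        (\<Sum>i. ennreal (diameter (U i))))"

definition H1 :: "point set \<Rightarrow> ennreal" where
  "H1 E = (SUP \<delta> \<in> {0<..}. hausdorff_pre1 \<delta> E)"

definition cone :: "real \<Rightarrow> point set" where
  "cone \<beta> = {p. \<bar>snd p\<bar> \<ge> \<beta> * \<bar>fst p\<bar>}"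

definition cone_ball :: "real \<Rightarrow> point \<Rightarrow> real \<Rightarrow> point set" where
  "cone_ball \<beta> x r = ((\<lambda>p. x + p) ` cone \<beta>) \<inter> cball x r"

definition cone_density :: "point set \<Rightarrow> real \<Rightarrow> point \<Rightarrow> ennreal" where
  "cone_density E \<beta> x = (SUP r \<in> {0<..}. H1 (cone_ball \<beta> x r \<inter> E) / ennreal r)"

definition lipschitz_graph :: "real \<Rightarrow> point set \<Rightarrow> bool" where
  "lipschitz_graph L \<Gamma> \<longleftrightarrow>
     (\<exists>A f. L-lipschitz_on A f \<and> \<Gamma> = {(t, f t) | t. t \<in> A})"

end

theory Submission
  imports Defs
begin


lemma pre_mono: "S \<subseteq> T \<Longrightarrow> hausdorff_pre1 d S \<le> hausdorff_pre1 d T"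
  unfolding hausdorff_pre1_def by (rule INF_superset_mono) auto

lemma H1_mono: "S \<subseteq> T \<Longrightarrow> H1 S \<le> H1 T"
  unfolding H1_def by (rule SUP_mono) (use pre_mono in blast)

lemma pre_le_H1: "0 < d \<Longrightarrow> hausdorff_pre1 d S \<le> H1 S"
  unfolding H1_def by (rule SUP_upper) auto

lemma pre_subadd:
  "hausdorff_pre1 d (\<Union>i. A i) \<le> (\<Sum>n. hausdorff_pre1 d (A n))"
proof (rule ennreal_le_epsilon)
  fix e :: real assume "0 < e" and fin: "(\<Sum>n. hausdorff_pre1 d (A n)) < top"
  let ?P = "\<lambda>S. {U :: nat \<Rightarrow> point set. S \<subseteq> (\<Union>i. U i) \<and>
                  (\<forall>i. bounded (U i) \<and> diameter (U i) \<le> d)}"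
  have lt: "hausdorff_pre1 d (A n) < hausdorff_pre1 d (A n) + e * (1/2)^Suc n" for n
  proof -
    have "hausdorff_pre1 d (A n) < top" using fin by (auto dest!: ennreal_suminf_lessD)
    moreover have "0 < (e * (1/2)^Suc n :: ennreal)" using \<open>0 < e\<close> by (simp add: ennreal_zero_less_mult_iff)
    ultimately have "hausdorff_pre1 d (A n) + 0 < hausdorff_pre1 d (A n) + e * (1/2)^Suc n"
      using ennreal_add_left_cancel_less by (simp add: top.not_eq_extremum)
    then show ?thesis by simp
  qed
  have "\<forall>n. \<exists>U. U \<in> ?P (A n) \<and> (\<Sum>i. ennreal (diameter (U i))) < hausdorff_pre1 d (A n) + e * (1/2)^Suc n"
    using lt unfolding hausdorff_pre1_def INF_less_iff by blast
  then have "\<exists>B. \<forall>n. B n \<in> ?P (A n) \<and> (\<Sum>i. ennreal (diameter (B n i))) < hausdorff_pre1 d (A n) + e * (1/2)^Suc n"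
    by (rule choice)
  then obtain B where BB: "\<forall>n. B n \<in> ?P (A n) \<and> (\<Sum>i. ennreal (diameter (B n i))) < hausdorff_pre1 d (A n) + e * (1/2)^Suc n"
    by blast
  have B: "\<And>n. B n \<in> ?P (A n)" using BB by blast
  have Ble: "\<And>n. (\<Sum>i. ennreal (diameter (B n i))) \<le> hausdorff_pre1 d (A n) + e * (1/2)^Suc n"
    using BB less_imp_le by blast
  define C where "C = case_prod B o prod_decode"
  have "C \<in> ?P (\<Union>i. A i)"
  proof -
    have "(\<Union>i. A i) \<subseteq> (\<Union>i. C i)"
    proof
      fix x assume "x \<in> (\<Union>i. A i)"
      then obtain n where "x \<in> A n" by auto
      with B obtain i where "x \<in> B n i" by blast
      then have "x \<in> C (prod_encode (n,i))" by (simp add: C_def)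
      then show "x \<in> (\<Union>i. C i)" by blast
    qed
    moreover have "bounded (C k) \<and> diameter (C k) \<le> d" for k
      using B by (simp add: C_def split_def)
    ultimately show ?thesis by blast
  qed
  then have "hausdorff_pre1 d (\<Union>i. A i) \<le> (\<Sum>k. ennreal (diameter (C k)))"
    unfolding hausdorff_pre1_def by (rule INF_lower)
  also have "\<dots> = (\<Sum>n. \<Sum>i. ennreal (diameter (B n i)))"
    unfolding C_def comp_def by (intro suminf_ennreal_2dimen) (simp add: split_def)
  also have "\<dots> \<le> (\<Sum>n. hausdorff_pre1 d (A n) + e * (1/2) ^ Suc n)"
    by (intro suminf_le allI Ble) auto
  also have "\<dots> = (\<Sum>n. hausdorff_pre1 d (A n)) + (\<Sum>n. ennreal e * ennreal ((1/2) ^ Suc n))"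
    using \<open>0 < e\<close> by (subst suminf_add[symmetric])
                       (auto simp del: ennreal_suminf_cmult simp add: ennreal_mult[symmetric])
  also have "\<dots> = (\<Sum>n. hausdorff_pre1 d (A n)) + e"
    unfolding ennreal_suminf_cmult
    by (subst suminf_ennreal_eq[OF zero_le_power power_half_series]) auto
  finally show "hausdorff_pre1 d (\<Union>i. A i) \<le> (\<Sum>n. hausdorff_pre1 d (A n)) + e" .
qed

lemma H1_subadd: "H1 (\<Union>i. A i) \<le> (\<Sum>n. H1 (A n))"
  unfolding H1_def[of "\<Union>i. A i"]
proof (rule SUP_least)
  fix d :: real assume "d \<in> {0<..}"
  then have "hausdorff_pre1 d (\<Union>i. A i) \<le> (\<Sum>n. hausdorff_pre1 d (A n))" by (rule pre_subadd[unfolded atomize_imp, THEN mp[OF impI]])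
  also have "\<dots> \<le> (\<Sum>n. H1 (A n))"
    using \<open>d \<in> {0<..}\<close> by (intro suminf_le allI pre_le_H1) auto
  finally show "hausdorff_pre1 d (\<Union>i. A i) \<le> (\<Sum>n. H1 (A n))" .
qed

lemma H1_empty: "H1 {} = 0"
proof -
  have "hausdorff_pre1 d {} \<le> 0" if "d > 0" for d
  proof -
    have "(\<lambda>i. {}) \<in> {U :: nat \<Rightarrow> point set. {} \<subseteq> (\<Union>i. U i) \<and>
                  (\<forall>i. bounded (U i) \<and> diameter (U i) \<le> d)}" using that by auto
    then have "hausdorff_pre1 d {} \<le> (\<Sum>i. ennreal (diameter ({}::point set)))"
      unfolding hausdorff_pre1_def by (rule INF_lower)
    then show ?thesis by simp
  qed
  then show ?thesis unfolding H1_def by (simp add: SUP_least antisym)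
qed

lemma H1_Un: "H1 (S \<union> T) \<le> H1 S + H1 T"
proof -
  define A where "A = (\<lambda>n::nat. if n = 0 then S else if n = 1 then T else {})"
  have "S \<union> T = (\<Union>i. A i)" unfolding A_def by (auto split: if_splits)
  then have "H1 (S \<union> T) \<le> (\<Sum>n. H1 (A n))" using H1_subadd by simp
  also have "(\<Sum>n. H1 (A n)) = (\<Sum>n<2. H1 (A n))"
    by (rule suminf_finite) (auto simp: A_def H1_empty)
  also have "\<dots> = H1 S + H1 T" by (simp add: A_def numeral_2_eq_2)
  finally show ?thesis .
qed



lemma dist_le_abs: "dist (p::point) q \<le> \<bar>fst p - fst q\<bar> + \<bar>snd p - snd q\<bar>"
  unfolding dist_prod_def dist_real_def using sqrt_sum_squares_le_sum_abs by simp

lemma dist_sq: "(dist (p::point) q)^2 = (fst p - fst q)^2 + (snd p - snd q)^2"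
  by (simp add: dist_prod_def dist_real_def)

lemma dens:
  assumes "cone_density E \<beta> x \<le> ennreal \<epsilon>" "r > 0" "\<epsilon> \<ge> 0"
  shows "H1 (cone_ball \<beta> x r \<inter> E) \<le> ennreal (\<epsilon> * r)"
proof -
  have "H1 (cone_ball \<beta> x r \<inter> E) / ennreal r \<le> ennreal \<epsilon>"
  proof -
    have "H1 (cone_ball \<beta> x r \<inter> E) / ennreal r \<le> cone_density E \<beta> x"
      unfolding cone_density_def using assms(2) by (intro SUP_upper) auto
    then show ?thesis using assms(1) by (rule order_trans)
  qed
  then have "H1 (cone_ball \<beta> x r \<inter> E) / ennreal r * ennreal r \<le> ennreal \<epsilon> * ennreal r"
    by (rule mult_right_mono) simp
  moreover have "H1 (cone_ball \<beta> x r \<inter> E) / ennreal r * ennreal r = H1 (cone_ball \<beta> x r \<inter> E)"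
    using assms(2) by (simp add: ennreal_divide_times)
  ultimately show ?thesis using assms by (simp add: ennreal_mult)
qed

lemma cone_ball_mem:
  assumes "\<bar>snd z - snd x\<bar> \<ge> \<beta> * \<bar>fst z - fst x\<bar>" "dist x z \<le> r"
  shows "z \<in> cone_ball \<beta> x r"
proof -
  have "z - x \<in> cone \<beta>" using assms by (simp add: cone_def)
  moreover have "z = x + (z - x)" by simp
  ultimately have "z \<in> (\<lambda>p. x + p) ` cone \<beta>" by blast
  then show ?thesis using assms by (simp add: cone_ball_def)
qed

lemma partner_vert:
  assumes "0 < \<beta>" "\<beta> < 1/2" "\<bar>snd y - snd x\<bar> \<ge> 2*\<beta>*\<bar>fst y - fst x\<bar>" "dist x (y::point) > h/2" "h > 0"
  shows "\<bar>snd y - snd x\<bar> \<ge> \<beta>*h/2"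
proof (rule ccontr)
  assume "\<not> ?thesis"
  then have a: "\<bar>snd y - snd x\<bar> < \<beta>*h/2" by simp
  have "2*\<beta>*\<bar>fst y - fst x\<bar> < 2*\<beta>*(h/4)" using a assms(3) by linarith
  then have "\<bar>fst y - fst x\<bar> < h/4" using assms(1) by simp
  moreover have "\<beta>*h/2 < h/4" using assms by simp
  ultimately have "\<bar>fst x - fst y\<bar> + \<bar>snd x - snd y\<bar> < h/2" using a by linarith
  then show False using dist_le_abs[of x y] assms(4) by linarith
qed

lemma cover_geo:
  assumes "0 < \<beta>" "\<beta> < 1/2" "h > 0"
    and cr: "\<bar>snd y - snd x\<bar> \<ge> 2*\<beta>*\<bar>fst y - fst x\<bar>"
    and d1: "dist x (y::point) > h/2" and d2: "dist x y \<le> h"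
    and z1: "\<bar>fst z - fst x\<bar> < h/8" and z2: "\<bar>snd z - snd x\<bar> < 10*h"
  shows "z \<in> cone_ball \<beta> x (11*h) \<or> z \<in> cone_ball \<beta> y (12*h)"
proof -
  have dz: "dist x z < 11*h" using dist_le_abs[of x z] z1 z2 assms(3) by (simp add: abs_minus_commute)
  show ?thesis
  proof (cases "\<bar>snd z - snd x\<bar> \<ge> \<beta> * \<bar>fst z - fst x\<bar>")
    case True
    then show ?thesis using cone_ball_mem[of \<beta> z x "11*h"] dz by simp
  next
    case False
    have v: "\<bar>snd y - snd x\<bar> \<ge> \<beta>*h/2" using partner_vert[OF assms(1,2) cr d1 assms(3)] .
    have w: "\<beta> * \<bar>fst z - fst x\<bar> \<le> \<beta> * (h/8)" using z1 assms(1) by simp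
    have "\<bar>snd z - snd y\<bar> \<ge> \<bar>snd y - snd x\<bar> - \<bar>snd z - snd x\<bar>" by linarith
    moreover have "\<beta> * \<bar>fst z - fst y\<bar> \<le> \<beta> * \<bar>fst y - fst x\<bar> + \<beta> * \<bar>fst z - fst x\<bar>"
      using assms(1) by (simp add: distrib_left[symmetric] mult_left_mono)
    ultimately have c: "\<bar>snd z - snd y\<bar> \<ge> \<beta> * \<bar>fst z - fst y\<bar>"
      using False w v cr by linarith
    have "dist y z \<le> dist y x + dist x z" by (rule dist_triangle)
    then have "dist y z \<le> 12*h" using dz d2 by (simp add: dist_commute)
    then show ?thesis using cone_ball_mem[of \<beta> z y "12*h"] c by simp
  qed
qed

definition TT :: "point \<Rightarrow> point" where "TT p = (fst p, snd p / 80)"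

lemma ellipse:
  assumes "dist (TT z) (TT x) < 5*(h/40)"
  shows "\<bar>fst z - fst x\<bar> < h/8 \<and> \<bar>snd z - snd x\<bar> < 10*h"
proof -
  have "dist (fst (TT z)) (fst (TT x)) < 5*(h/40)" using dist_fst_le assms le_less_trans by blast
  moreover have "dist (snd (TT z)) (snd (TT x)) < 5*(h/40)" using dist_snd_le assms le_less_trans by blast
  ultimately have "\<bar>fst z - fst x\<bar> < 5*(h/40)" "\<bar>snd z / 80 - snd x / 80\<bar> < 5*(h/40)"
    by (simp_all add: TT_def dist_real_def)
  moreover have "snd z / 80 - snd x / 80 = (snd z - snd x) / 80" by (simp add: field_simps)
  ultimately show ?thesis by (simp add: abs_divide)
qed

lemma sep:
  assumes "dist (TT i) (TT j) > s" "s > 0"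
  shows "\<bar>fst i - fst j\<bar> \<ge> s/2 \<or> \<bar>snd i - snd j\<bar> > 40 * s"
proof (rule ccontr)
  assume "\<not> ?thesis"
  then have a: "\<bar>fst i - fst j\<bar> < s/2" "\<bar>snd i - snd j\<bar> \<le> 40 * s" by auto
  have "s^2 < (dist (TT i) (TT j))^2" using assms by (simp add: power_strict_mono)
  also have "\<dots> = (fst i - fst j)^2 + ((snd i - snd j)/80)^2"
    by (simp add: dist_sq TT_def diff_divide_distrib)
  also have "\<dots> \<le> (s/2)^2 + (s/2)^2"
  proof (intro add_mono)
    have "\<bar>fst i - fst j\<bar> \<le> \<bar>s/2\<bar>" using a(1) assms(2) by simp
    then show "(fst i - fst j)^2 \<le> (s/2)^2" using abs_le_square_iff by blast
    have "\<bar>(snd i - snd j)/80\<bar> \<le> \<bar>s/2\<bar>" using a(2) assms(2) by (simp add: abs_divide)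
    then show "((snd i - snd j)/80)^2 \<le> (s/2)^2" using abs_le_square_iff by blast
  qed
  finally have "s^2 < (s/2)^2 + (s/2)^2" .
  then show False using zero_le_power2[of s] by (simp add: power_divide)
qed



lemma cball_disj_dist:
  fixes a b :: "'a::real_normed_vector"
  assumes "disjnt (cball a r) (cball b s)" "r \<ge> 0" "s \<ge> 0"
  shows "dist a b > r + s"
proof (rule ccontr)
  assume "\<not> ?thesis"
  then have le: "dist a b \<le> r + s" by simp
  show False
  proof (cases "dist a b \<le> r")
    case True
    then have "b \<in> cball a r \<inter> cball b s" using assms by simp
    then show False using assms(1) by (auto simp: disjnt_def)
  next
    case False
    define d where "d = dist a b"
    have dpos: "d > 0" using False assms(2) d_def by linarith
    define p where "p = a + (r/d) *\<^sub>R (b - a)"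
    have nd: "norm (b - a) = d" by (simp add: d_def dist_norm norm_minus_commute)
    have "dist a p = r"
      using dpos assms(2) by (simp add: p_def dist_norm nd)
    moreover have "b - p = (1 - r/d) *\<^sub>R (b - a)" by (simp add: p_def algebra_simps)
    then have "dist p b = (1 - r/d) * d"
      using dpos False d_def by (simp add: dist_norm norm_minus_commute nd)
    then have "dist p b = d - r" using dpos by (simp add: algebra_simps)
    ultimately have "p \<in> cball a r \<inter> cball b s" using le d_def by (simp add: dist_commute)
    then show False using assms(1) by (auto simp: disjnt_def)
  qed
qed



theorem main_bound:
  fixes E :: "point set" and \<epsilon> \<beta> :: real
  assumes Eb: "E \<subseteq> cball 0 1" and ep: "0 < \<epsilon>" and bp: "0 < \<beta>" and bh: "\<beta> < 1/2"
  shows "\<exists>\<Gamma>. lipschitz_graph (2 * \<beta>) \<Gamma> \<and>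
           H1 ({x \<in> E. cone_density E \<beta> x \<le> ennreal \<epsilon>} - \<Gamma>) \<le> ennreal (3680 * \<epsilon>)"
proof -
  define G where "G = {x \<in> E. cone_density E \<beta> x \<le> ennreal \<epsilon>}"
  define cr where "cr = (\<lambda>x y::point. \<bar>snd y - snd x\<bar> \<ge> 2*\<beta>*\<bar>fst y - fst x\<bar>)"
  define U where "U = {x\<in>G. \<exists>y\<in>G. y \<noteq> x \<and> cr x y}"
  define Dset where "Dset = (\<lambda>x. {dist x y | y. y \<in> G \<and> y \<noteq> x \<and> cr x y})"
  define hh where "hh = (\<lambda>x. Sup (Dset x))"
  have GE: "G \<subseteq> E" unfolding G_def by auto
  have UG: "U \<subseteq> G" unfolding U_def by auto
  have nrm: "norm x \<le> 1" if "x \<in> G" for x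
    using that GE Eb by (meson subsetD mem_cball_0)
  have d2: "dist x y \<le> 2" if "x \<in> G" "y \<in> G" for x y
  proof -
    have "dist x y \<le> norm x + norm y" by (simp add: dist_norm norm_triangle_ineq4)
    then show ?thesis using nrm[OF that(1)] nrm[OF that(2)] by linarith
  qed
  have crsym: "cr x y \<longleftrightarrow> cr y x" for x y unfolding cr_def by (simp add: abs_minus_commute)
  have bdd: "bdd_above (Dset x)" if "x \<in> G" for x
    unfolding Dset_def by (rule bdd_aboveI[where M=2]) (use d2 that in blast)
  have hh_upper: "dist x y \<le> hh x" if "x \<in> G" "y \<in> G" "y \<noteq> x" "cr x y" for x y
    unfolding hh_def using bdd[OF that(1)] by (rule cSup_upper[rotated]) (unfold Dset_def, use that in blast)
  have Dne: "Dset x \<noteq> {}" if "x \<in> U" for x using that unfolding U_def Dset_def by blast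
  have hh_pos: "0 < hh x" "hh x \<le> 2" if xU: "x \<in> U" for x
  proof -
    obtain y where y: "y \<in> G" "y \<noteq> x" "cr x y" using xU unfolding U_def by blast
    have "0 < dist x y" using y by simp
    also have "\<dots> \<le> hh x" using hh_upper[OF _ y(1) y(2) y(3)] xU UG by blast
    finally show "0 < hh x" .
    show "hh x \<le> 2" unfolding hh_def using Dne[OF xU] xU UG d2
      by (intro cSup_least) (unfold Dset_def, blast+)
  qed
  have partner: "\<exists>y\<in>G. y \<noteq> x \<and> cr x y \<and> hh x / 2 < dist x y" if "x \<in> U" for x
  proof -
    have xG: "x \<in> G" using that UG by blast
    have "hh x / 2 < Sup (Dset x)" using hh_pos[OF that] unfolding hh_def by simp
    then have "\<exists>t\<in>Dset x. hh x / 2 < t"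
      using less_cSup_iff[OF Dne[OF that] bdd[OF xG]] by blast
    then show ?thesis unfolding Dset_def by auto
  qed

  define \<Gamma> where "\<Gamma> = G - U"
  have uniq: "p = q" if "p \<in> \<Gamma>" "q \<in> \<Gamma>" "fst p = fst q" for p q
  proof (rule ccontr)
    assume "p \<noteq> q"
    moreover have "cr p q" unfolding cr_def using that(3) by simp
    ultimately have "p \<in> U" using that unfolding \<Gamma>_def U_def by auto
    then show False using that unfolding \<Gamma>_def by auto
  qed
  have lipg: "\<bar>snd p - snd q\<bar> \<le> 2*\<beta>*\<bar>fst p - fst q\<bar>" if "p \<in> \<Gamma>" "q \<in> \<Gamma>" for p q
  proof (cases "p = q")
    case True then show ?thesis by simp
  next
    case False
    have "\<not> cr p q"
    proof
      assume "cr p q"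
      then have "p \<in> U" using that False unfolding \<Gamma>_def U_def by auto
      then show False using that unfolding \<Gamma>_def by auto
    qed
    then show ?thesis unfolding cr_def by (simp add: abs_minus_commute)
  qed
  define f where "f = (\<lambda>t. snd (SOME p. p \<in> \<Gamma> \<and> fst p = t))"
  have fp: "f (fst p) = snd p" if "p \<in> \<Gamma>" for p
  proof -
    have "(SOME q. q \<in> \<Gamma> \<and> fst q = fst p) \<in> \<Gamma> \<and> fst (SOME q. q \<in> \<Gamma> \<and> fst q = fst p) = fst p"
      by (rule someI[of _ p]) (use that in auto)
    then have "(SOME q. q \<in> \<Gamma> \<and> fst q = fst p) = p" using uniq that by blast
    then show ?thesis unfolding f_def by simp
  qed
  have lg: "lipschitz_graph (2 * \<beta>) \<Gamma>"
    unfolding lipschitz_graph_def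
  proof (intro exI conjI)
    show "(2 * \<beta>)-lipschitz_on (fst ` \<Gamma>) f"
    proof (rule lipschitz_onI)
      fix s t assume "s \<in> fst ` \<Gamma>" "t \<in> fst ` \<Gamma>"
      then obtain p q where pq: "p \<in> \<Gamma>" "q \<in> \<Gamma>" "s = fst p" "t = fst q" by auto
      then show "dist (f s) (f t) \<le> 2 * \<beta> * dist s t"
        using lipg[OF pq(1,2)] fp[OF pq(1)] fp[OF pq(2)] by (simp add: dist_real_def)
    next
      show "0 \<le> 2 * \<beta>" using bp by simp
    qed
    show "\<Gamma> = {(t, f t) |t. t \<in> fst ` \<Gamma>}"
    proof
      show "\<Gamma> \<subseteq> {(t, f t) |t. t \<in> fst ` \<Gamma>}"
      proof
        fix p assume "p \<in> \<Gamma>"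
        then have "p = (fst p, f (fst p))" using fp by simp
        then show "p \<in> {(t, f t) |t. t \<in> fst ` \<Gamma>}" using \<open>p \<in> \<Gamma>\<close> by blast
      qed
      show "{(t, f t) |t. t \<in> fst ` \<Gamma>} \<subseteq> \<Gamma>"
      proof
        fix z assume "z \<in> {(t, f t) |t. t \<in> fst ` \<Gamma>}"
        then obtain p where "p \<in> \<Gamma>" "z = (fst p, f (fst p))" by auto
        then show "z \<in> \<Gamma>" using fp by simp
      qed
    qed
  qed

  have setEq: "{x \<in> E. cone_density E \<beta> x \<le> ennreal \<epsilon>} - \<Gamma> = U"
    using UG unfolding \<Gamma>_def G_def by auto
  define r where "r = (\<lambda>x. hh x / 40)"
  have rU: "0 < r i \<and> r i \<le> 1" if "i \<in> U" for i using hh_pos[OF that] unfolding r_def by simp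
  have "\<exists>C. countable C \<and> C \<subseteq> U \<and> pairwise (\<lambda>i j. disjnt (cball (TT i) (r i)) (cball (TT j) (r j))) C \<and>
      (\<forall>i\<in>U. \<exists>j. j \<in> C \<and> \<not> disjnt (cball (TT i) (r i)) (cball (TT j) (r j)) \<and>
                        cball (TT i) (r i) \<subseteq> ball (TT j) (5 * r j))"
  proof (rule Vitali_covering_lemma_cballs_balls[of U r 1 TT])
    show "\<And>i. i \<in> U \<Longrightarrow> 0 < r i \<and> r i \<le> 1" by (rule rU)
  next
    fix C assume "countable C" "C \<subseteq> U" "pairwise (\<lambda>i j. disjnt (cball (TT i) (r i)) (cball (TT j) (r j))) C"
      "\<And>i. i \<in> U \<Longrightarrow> \<exists>j. j \<in> C \<and> \<not> disjnt (cball (TT i) (r i)) (cball (TT j) (r j)) \<and>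
                        cball (TT i) (r i) \<subseteq> ball (TT j) (5 * r j)"
    then show ?thesis by blast
  qed
  then obtain C where C: "countable C" "C \<subseteq> U"
     and pw: "pairwise (\<lambda>i j. disjnt (cball (TT i) (r i)) (cball (TT j) (r j))) C"
     and cov: "\<And>i. i \<in> U \<Longrightarrow> \<exists>j. j \<in> C \<and> \<not> disjnt (cball (TT i) (r i)) (cball (TT j) (r j)) \<and>
                        cball (TT i) (r i) \<subseteq> ball (TT j) (5 * r j)"
    by blast
  have sepC: "\<bar>fst i - fst j\<bar> \<ge> (r i + r j)/2" if "i \<in> C" "j \<in> C" "i \<noteq> j" for i j
  proof (rule ccontr)
    assume a: "\<not> ?thesis"
    have iU: "i \<in> U" and jU: "j \<in> U" using that C by auto
    have "disjnt (cball (TT i) (r i)) (cball (TT j) (r j))" using pw that unfolding pairwise_def by blast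
    then have "dist (TT i) (TT j) > r i + r j"
      using rU[OF iU] rU[OF jU] by (intro cball_disj_dist) auto
    then have "\<bar>fst i - fst j\<bar> \<ge> (r i + r j)/2 \<or> \<bar>snd i - snd j\<bar> > 40 * (r i + r j)"
      using rU[OF iU] rU[OF jU] by (intro sep) auto
    then have b: "\<bar>snd i - snd j\<bar> > 40 * (r i + r j)" using a by auto
    have "2*\<beta>*\<bar>fst j - fst i\<bar> \<le> \<bar>fst j - fst i\<bar>" using bp bh by (simp add: mult_left_le_one_le)
    also have "\<dots> < (r i + r j)/2" using a by (simp add: abs_minus_commute)
    also have "\<dots> \<le> \<bar>snd j - snd i\<bar>" using b rU[OF iU] rU[OF jU] by (simp add: abs_minus_commute)
    finally have "cr i j" unfolding cr_def by simp
    then have "dist i j \<le> hh i" using hh_upper[of i j] iU jU UG that(3) by auto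
    moreover have "\<bar>snd i - snd j\<bar> \<le> dist i j" using dist_snd_le[of i j] by (simp add: dist_real_def)
    moreover have "40 * (r i + r j) = hh i + hh j" unfolding r_def by simp
    ultimately show False using b hh_pos[OF jU] by linarith
  qed
  define N where "N = to_nat_on C ` C"
  define e where "e = from_nat_into C"
  have eC: "e n \<in> C" if "n \<in> N" for n using that C(1) unfolding N_def e_def by auto
  have eN: "to_nat_on C (e n) = n" if "n \<in> N" for n using that unfolding N_def e_def by simp
  have ce: "e (to_nat_on C c) = c" "to_nat_on C c \<in> N" if "c \<in> C" for c
    using that C(1) unfolding N_def e_def by auto

  define J where "J = (\<lambda>n. if n \<in> N then {fst (e n) - r (e n)/2 <..< fst (e n) + r (e n)/2} else {})"
  have Jdisj: "disjoint_family J"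
  proof (unfold disjoint_family_on_def, intro ballI impI)
    fix m n :: nat assume "m \<noteq> n"
    show "J m \<inter> J n = {}"
    proof (cases "m \<in> N \<and> n \<in> N")
      case True
      then have "e m \<noteq> e n" using eN \<open>m \<noteq> n\<close> by metis
      then have "\<bar>fst (e m) - fst (e n)\<bar> \<ge> (r (e m) + r (e n))/2" using sepC eC True by blast
      then show ?thesis using True unfolding J_def by (auto simp: abs_if split: if_splits)
    next
      case False then show ?thesis unfolding J_def by auto
    qed
  qed
  have Jsub: "(\<Union>n. J n) \<subseteq> {-2..2}"
  proof
    fix t assume "t \<in> (\<Union>n. J n)"
    then obtain n where n: "n \<in> N" "t \<in> {fst (e n) - r (e n)/2 <..< fst (e n) + r (e n)/2}"
      unfolding J_def by (auto split: if_splits)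
    have "e n \<in> U" using eC[OF n(1)] C by auto
    then have eG: "e n \<in> G" using UG by blast
    have "\<bar>fst (e n)\<bar> \<le> norm (e n)" using norm_fst_le[of "fst (e n)" "snd (e n)"] by simp
    then have "\<bar>fst (e n)\<bar> \<le> 1" using nrm[OF eG] by linarith
    moreover have "r (e n) \<le> 1" using rU \<open>e n \<in> U\<close> by blast
    ultimately show "t \<in> {-2..2}" using n(2) by auto
  qed
  have sumJ: "(\<Sum>n. (if n \<in> N then ennreal (r (e n)) else 0)) \<le> 4"
  proof -
    have "(\<Sum>n. (if n \<in> N then ennreal (r (e n)) else 0)) = (\<Sum>n. emeasure lborel (J n))"
    proof (rule suminf_cong)
      fix n show "(if n \<in> N then ennreal (r (e n)) else 0) = emeasure lborel (J n)"
      proof (cases "n \<in> N")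
        case True
        then have "0 < r (e n)" using rU eC C by blast
        then show ?thesis using True unfolding J_def by simp
      qed (simp add: J_def)
    qed
    also have "\<dots> = emeasure lborel (\<Union>n. J n)"
      using Jdisj by (intro suminf_emeasure) (auto simp: J_def)
    also have "\<dots> \<le> emeasure lborel {-2..2::real}"
      using Jsub by (intro emeasure_mono) auto
    also have "\<dots> = 4" by simp
    finally show ?thesis .
  qed

  define S where "S = (\<lambda>n. if n \<in> N then {z \<in> U. TT z \<in> ball (TT (e n)) (5 * r (e n))} else {})"
  have US: "U \<subseteq> (\<Union>n. S n)"
  proof
    fix z assume z: "z \<in> U"
    obtain j where j: "j \<in> C" "cball (TT z) (r z) \<subseteq> ball (TT j) (5 * r j)" using cov[OF z] by blast
    have "TT z \<in> cball (TT z) (r z)" using rU[OF z] by simp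
    then have "TT z \<in> ball (TT j) (5 * r j)" using j by blast
    then have "z \<in> S (to_nat_on C j)" using ce[OF j(1)] z unfolding S_def by simp
    then show "z \<in> (\<Union>n. S n)" by blast
  qed
  have HS: "H1 (S n) \<le> (if n \<in> N then ennreal (920 * \<epsilon>) * ennreal (r (e n)) else 0)" for n
  proof (cases "n \<in> N")
    case False then show ?thesis by (simp add: S_def H1_empty)
  next
    case True
    define c where "c = e n"
    have cU: "c \<in> U" using eC[OF True] C unfolding c_def by auto
    define h where "h = hh c"
    have hpos: "h > 0" using hh_pos[OF cU] h_def by simp
    obtain y where y: "y \<in> G" "y \<noteq> c" "cr c y" "h / 2 < dist c y" using partner[OF cU] h_def by auto
    have dy: "dist c y \<le> h" using hh_upper[of c y] y cU UG h_def by auto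
    have sub: "S n \<subseteq> (cone_ball \<beta> c (11*h) \<inter> E) \<union> (cone_ball \<beta> y (12*h) \<inter> E)"
    proof
      fix z assume "z \<in> S n"
      then have zU: "z \<in> U" and zb: "TT z \<in> ball (TT c) (5 * r c)" using True unfolding S_def c_def by auto
      have "dist (TT z) (TT c) < 5 * (h/40)" using zb unfolding r_def h_def by (simp add: dist_commute)
      then have zz: "\<bar>fst z - fst c\<bar> < h/8 \<and> \<bar>snd z - snd c\<bar> < 10*h" by (rule ellipse)
      have "z \<in> cone_ball \<beta> c (11*h) \<or> z \<in> cone_ball \<beta> y (12*h)"
        using cover_geo[OF bp bh hpos, where x=c and y=y and z=z] y(3) y(4) dy zz unfolding cr_def by blast
      moreover have "z \<in> E" using zU UG GE by auto
      ultimately show "z \<in> (cone_ball \<beta> c (11*h) \<inter> E) \<union> (cone_ball \<beta> y (12*h) \<inter> E)" by auto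
    qed
    have cG: "cone_density E \<beta> c \<le> ennreal \<epsilon>" using cU UG unfolding G_def by auto
    have yG: "cone_density E \<beta> y \<le> ennreal \<epsilon>" using y(1) unfolding G_def by auto
    have "H1 (S n) \<le> H1 ((cone_ball \<beta> c (11*h) \<inter> E) \<union> (cone_ball \<beta> y (12*h) \<inter> E))"
      using sub by (rule H1_mono)
    also have "\<dots> \<le> H1 (cone_ball \<beta> c (11*h) \<inter> E) + H1 (cone_ball \<beta> y (12*h) \<inter> E)" by (rule H1_Un)
    also have "\<dots> \<le> ennreal (\<epsilon> * (11*h)) + ennreal (\<epsilon> * (12*h))"
      using dens[OF cG, of "11*h"] dens[OF yG, of "12*h"] hpos ep by (intro add_mono) auto
    also have "\<dots> = ennreal (920 * \<epsilon>) * ennreal (r c)"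
      using hpos ep unfolding r_def h_def
      by (simp add: ennreal_plus[symmetric] ennreal_mult[symmetric] del: ennreal_plus)
    finally show ?thesis using True c_def by simp
  qed
  have "H1 U \<le> H1 (\<Union>n. S n)" using US by (rule H1_mono)
  also have "\<dots> \<le> (\<Sum>n. H1 (S n))" by (rule H1_subadd)
  also have "\<dots> \<le> (\<Sum>n. ennreal (920 * \<epsilon>) * (if n \<in> N then ennreal (r (e n)) else 0))"
  proof (intro suminf_le allI)
    fix n show "H1 (S n) \<le> ennreal (920 * \<epsilon>) * (if n \<in> N then ennreal (r (e n)) else 0)"
      using HS[of n] by (cases "n \<in> N") auto
  qed auto
  also have "\<dots> = ennreal (920 * \<epsilon>) * (\<Sum>n. (if n \<in> N then ennreal (r (e n)) else 0))"
    by (rule ennreal_suminf_cmult)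
  also have "\<dots> \<le> ennreal (920 * \<epsilon>) * 4" using sumJ by (rule mult_left_mono) simp
  also have "\<dots> = ennreal (3680 * \<epsilon>)"
  proof -
    have a: "ennreal (920 * \<epsilon>) * ennreal 4 = ennreal (920 * \<epsilon> * 4)"
      using ep by (intro ennreal_mult[symmetric]) auto
    have b: "920 * \<epsilon> * 4 = 3680 * \<epsilon>" by simp
    have c: "(4::ennreal) = ennreal 4" by simp
    show ?thesis by (subst c) (simp only: a b)
  qed
  finally have "H1 U \<le> ennreal (3680 * \<epsilon>)" .
  then show ?thesis using lg setEq by auto
qed


theorem lemma4p3:
  "\<exists>A::real. A > 0 \<and>
     (\<forall>(E::point set) (\<epsilon>::real) (\<beta>::real).
        E \<subseteq> cball 0 1 \<and> 0 < \<epsilon> \<and> \<epsilon> < 1 \<and> 0 < \<beta> \<and> \<beta> < 1/2 \<longrightarrow>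
        (\<exists>\<Gamma>. lipschitz_graph (2 * \<beta>) \<Gamma> \<and>
           H1 ({x \<in> E. cone_density E \<beta> x \<le> ennreal \<epsilon>} - \<Gamma>) \<le> ennreal (A * \<epsilon> / \<beta>)))"
proof (intro exI[of _ 3680] conjI allI impI)
  show "(0::real) < 3680" by simp
  fix E :: "point set" and \<epsilon> \<beta> :: real
  assume a: "E \<subseteq> cball 0 1 \<and> 0 < \<epsilon> \<and> \<epsilon> < 1 \<and> 0 < \<beta> \<and> \<beta> < 1/2"
  then obtain \<Gamma> where g: "lipschitz_graph (2 * \<beta>) \<Gamma>"
    and h: "H1 ({x \<in> E. cone_density E \<beta> x \<le> ennreal \<epsilon>} - \<Gamma>) \<le> ennreal (3680 * \<epsilon>)"
    using main_bound[of E \<epsilon> \<beta>] by blast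
  have "3680 * \<epsilon> \<le> 3680 * \<epsilon> / \<beta>"
    using a by (simp add: le_divide_eq)
  then have "ennreal (3680 * \<epsilon>) \<le> ennreal (3680 * \<epsilon> / \<beta>)" by (rule ennreal_leI)
  with g h show "\<exists>\<Gamma>. lipschitz_graph (2 * \<beta>) \<Gamma> \<and>
           H1 ({x \<in> E. cone_density E \<beta> x \<le> ennreal \<epsilon>} - \<Gamma>) \<le> ennreal (3680 * \<epsilon> / \<beta>)"
    by (meson order_trans)
qed

end
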